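(* For any $k \ge 1$, the total number of binary words (of any length, including the empty word) that avoid $0^i1^{k-i}$ for all $i \in \{0,1,\dots,k\}$ is $C_{k+1} - 1$; equivalently $\sum_{m=0}^{2k-2} B(k,m) = C_{k+1}-1$, where $C_n=\frac{1}{n+1}\binom{2n}{n}$.
   Context: A binary word avoids a word $u$ if $u$ does not occur in it as a (not necessarily contiguous) subsequence. For $k\ge1$, $m \ge 0$, $B(k,m)$ is the number of such avoiding binary words of length $m$ (it is $0$ for $m \ge 2k-1$). *)

theory Defs
  imports Main "HOL-Library.Sublist"
begin

text \<open>Binary words are lists of booleans: letter 0 is False, letter 1 is True.
  subseq u w: u occurs in w as a (not necessarily contiguous) subsequence.\<close>

definition avoids :: "bool list \<Rightarrow> bool list \<Rightarrow> bool" where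
  "avoids w u \<longleftrightarrow> \<not> subseq u w"

definition zero_one_word :: "nat \<Rightarrow> nat \<Rightarrow> bool list" where
  "zero_one_word i j = replicate i False @ replicate j True"

definition avoid_all :: "nat \<Rightarrow> bool list \<Rightarrow> bool" where
  "avoid_all k w \<longleftrightarrow> (\<forall>i\<in>{0..k}. avoids w (zero_one_word i (k - i)))"

definition B :: "nat \<Rightarrow> nat \<Rightarrow> nat" where
  "B k m = card {w :: bool list. length w = m \<and> avoid_all k w}"

definition catalan :: "nat \<Rightarrow> nat" where
  "catalan n = ((2 * n) choose n) div (n + 1)"

end

theory Submission
  imports Defs
begin

definition ones :: "bool list \<Rightarrow> nat" where "ones w = length (filter id w)"

lemma ones_simps[simp]: "ones [] = 0" "ones (True#w) = Suc (ones w)" "ones (False#w) = ones w"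
  by (auto simp: ones_def)

lemma subseq_T: "subseq (replicate j True) w \<longleftrightarrow> j \<le> ones w"
proof (induction w arbitrary: j)
  case Nil then show ?case by (cases j) simp_all
next
  case (Cons x w)
  show ?case
  proof (cases j)
    case 0 then show ?thesis by simp
  next
    case (Suc j')
    show ?thesis
    proof (cases x)
      case True
      then show ?thesis using Cons.IH[of j'] Suc by simp
    next
      case False
      then show ?thesis using Cons.IH[of j] Suc by simp
    qed
  qed
qed

lemma subseq_F_F: "subseq (replicate (Suc i) False @ replicate j True) (False#w)
   \<longleftrightarrow> subseq (replicate i False @ replicate j True) w"
  by (simp add: subseq_Cons2_iff)

lemma subseq_F_T: "subseq (replicate (Suc i) False @ replicate j True) (True#w)
   \<longleftrightarrow> subseq (replicate (Suc i) False @ replicate j True) w"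
  by (simp add: subseq_Cons2_iff)

lemma subseq_T_F: "subseq (replicate j True) (False#w) \<longleftrightarrow> subseq (replicate j True) w"
  using subseq_T[of j "False#w"] subseq_T[of j w] by simp

lemma subseq_T_T: "subseq (replicate j True) (True#w) \<longleftrightarrow> j \<le> Suc (ones w)"
  using subseq_T[of j "True#w"] by simp

lemma R0: "\<not> avoid_all 0 w"
  by (simp add: avoid_all_def avoids_def zero_one_word_def)

lemma R1: "avoid_all (Suc m) []"
  by (auto simp: avoid_all_def avoids_def zero_one_word_def)

lemma R2: "avoid_all (Suc m) (False#w) \<longleftrightarrow> avoid_all m w"
proof
  assume a: "avoid_all (Suc m) (False#w)"
  show "avoid_all m w" unfolding avoid_all_def avoids_def zero_one_word_def
  proof
    fix i assume "i \<in> {0..m}"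
    then have "Suc i \<in> {0..Suc m}" by simp
    with a have "\<not> subseq (replicate (Suc i) False @ replicate (Suc m - Suc i) True) (False#w)"
      unfolding avoid_all_def avoids_def zero_one_word_def by blast
    then show "\<not> subseq (replicate i False @ replicate (m - i) True) w"
      by (simp only: subseq_F_F) simp
  qed
next
  assume a: "avoid_all m w"
  show "avoid_all (Suc m) (False#w)" unfolding avoid_all_def avoids_def zero_one_word_def
  proof
    fix i assume i: "i \<in> {0..Suc m}"
    show "\<not> subseq (replicate i False @ replicate (Suc m - i) True) (False # w)"
    proof (cases i)
      case 0
      from a have "\<not> subseq (replicate m True) w"
        unfolding avoid_all_def avoids_def zero_one_word_def by (auto dest: bspec[of _ _ 0])
      then show ?thesis using 0 subseq_T_F subseq_T[of "Suc m" w] subseq_T[of m w] by simp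
    next
      case (Suc i')
      with i have "i' \<in> {0..m}" by simp
      with a have "\<not> subseq (replicate i' False @ replicate (m - i') True) w"
        unfolding avoid_all_def avoids_def zero_one_word_def by blast
      then show ?thesis using Suc subseq_F_F by simp
    qed
  qed
qed

lemma R3: "avoid_all n (True#w) \<longleftrightarrow> avoid_all n w \<and> ones w + 1 < n"
proof
  assume a: "avoid_all n (True#w)"
  have 0: "\<not> subseq (replicate n True) (True#w)"
    using a unfolding avoid_all_def avoids_def zero_one_word_def
    by (auto dest: bspec[of _ _ 0])
  then have o: "ones w + 1 < n" using subseq_T_T by simp
  have "avoid_all n w" unfolding avoid_all_def avoids_def zero_one_word_def
  proof
    fix i assume i: "i \<in> {0..n}"
    show "\<not> subseq (replicate i False @ replicate (n - i) True) w"
    proof (cases i)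
      case 0 then show ?thesis using o subseq_T by simp
    next
      case (Suc i')
      with a i have "\<not> subseq (replicate (Suc i') False @ replicate (n - Suc i') True) (True#w)"
        unfolding avoid_all_def avoids_def zero_one_word_def by blast
      then show ?thesis using Suc subseq_F_T by simp
    qed
  qed
  with o show "avoid_all n w \<and> ones w + 1 < n" by simp
next
  assume a: "avoid_all n w \<and> ones w + 1 < n"
  show "avoid_all n (True#w)" unfolding avoid_all_def avoids_def zero_one_word_def
  proof
    fix i assume i: "i \<in> {0..n}"
    show "\<not> subseq (replicate i False @ replicate (n - i) True) (True#w)"
    proof (cases i)
      case 0 then show ?thesis using a subseq_T_T by simp
    next
      case (Suc i')
      with a i have "\<not> subseq (replicate (Suc i') False @ replicate (n - Suc i') True) w"
        unfolding avoid_all_def avoids_def zero_one_word_def by blast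
      then show ?thesis using Suc subseq_F_T by simp
    qed
  qed
qed

lemma counts: "avoid_all n w \<Longrightarrow> ones w < n \<and> length w - ones w < n"
proof (induction w arbitrary: n)
  case Nil then show ?case using R0 by (cases n) auto
next
  case (Cons x w)
  show ?case
  proof (cases x)
    case True
    with Cons have "avoid_all n w \<and> ones w + 1 < n" using R3 by simp
    with Cons.IH[of n] True show ?thesis by auto
  next
    case False
    then obtain m where n: "n = Suc m" using Cons.prems R0 by (cases n) auto
    with Cons.prems False have "avoid_all m w" using R2 by simp
    with Cons.IH[of m] False n show ?thesis by (cases w) auto
  qed
qed


definition S :: "nat \<Rightarrow> nat \<Rightarrow> bool list set" where
  "S n c = {w. avoid_all n w \<and> ones w < c}"

definition bt :: "nat \<Rightarrow> nat \<Rightarrow> int" where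
  "bt n c = int ((n+1+c) choose c) - (case c of 0 \<Rightarrow> 0 | Suc d \<Rightarrow> int ((n+1+c) choose d))"

lemma S_eq:
  assumes "c \<ge> 1" "c \<le> Suc m"
  shows "S (Suc m) c = insert [] ((#) False ` S m (min c m) \<union> (#) True ` S (Suc m) (c-1))"
proof (rule set_eqI)
  fix w
  show "w \<in> S (Suc m) c \<longleftrightarrow> w \<in> insert [] ((#) False ` S m (min c m) \<union> (#) True ` S (Suc m) (c-1))"
  proof (cases w)
    case Nil then show ?thesis using R1 assms by (simp add: S_def)
  next
    case (Cons x w')
    show ?thesis
    proof (cases x)
      case True
      then show ?thesis using Cons R3[of "Suc m" w'] assms by (auto simp: S_def)
    next
      case False
      then show ?thesis using Cons R2[of m w'] counts[of m w'] assms by (auto simp: S_def)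
    qed
  qed
qed

lemma bt_pascal: "bt (Suc m) (Suc c) = bt m (Suc c) + bt (Suc m) c"
proof (cases c)
  case 0
  then show ?thesis by (simp add: bt_def)
next
  case (Suc d)
  have e1: "Suc m + 1 + Suc c = Suc (m + 1 + Suc c)" by simp
  have e2: "Suc m + 1 + c = m + 1 + Suc c" by simp
  show ?thesis unfolding bt_def e1 e2 using Suc by (simp add: binomial_Suc_Suc)
qed

lemma bt_diag: "bt m (Suc m) = bt m m"
proof -
  have a: "(2*m+1 choose Suc m) = (2*m+1 choose m)"
    using binomial_symmetric[of "Suc m" "2*m+1"] by simp
  have e1: "m + 1 + Suc m = Suc (2*m+1)" by simp
  have e2: "m + 1 + m = 2*m+1" by simp
  show ?thesis
  proof (cases m)
    case 0 then show ?thesis by (simp add: bt_def)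
  next
    case (Suc d)
    have b: "(Suc (2*m+1) choose m) = (2*m+1 choose d) + (2*m+1 choose m)"
      using Suc binomial_Suc_Suc[of "2*m+1" d] by simp
    show ?thesis unfolding bt_def e1 e2 using Suc a b binomial_Suc_Suc[of "2*m+1" m] by simp
  qed
qed

lemma main: "c \<le> n \<Longrightarrow> finite (S n c) \<and> int (card (S n c)) + 1 = bt n c"
proof (induction n arbitrary: c)
  case 0
  then have "S 0 c = {}" using R0 by (auto simp: S_def)
  with 0 show ?case by (simp add: bt_def)
next
  case (Suc m)
  note IHo = Suc.IH
  show ?case using Suc.prems
  proof (induction c)
    case 0
    then have "S (Suc m) 0 = {}" by (auto simp: S_def)
    then show ?case by (simp add: bt_def)
  next
    case (Suc c')
    then have IHc: "finite (S (Suc m) c') \<and> int (card (S (Suc m) c')) + 1 = bt (Suc m) c'" by simp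
    have IHm: "finite (S m (min (Suc c') m)) \<and> int (card (S m (min (Suc c') m))) + 1 = bt m (min (Suc c') m)"
      using IHo[of "min (Suc c') m"] by simp
    have bteq: "bt m (min (Suc c') m) = bt m (Suc c')"
    proof (cases "Suc c' \<le> m")
      case True then show ?thesis by simp
    next
      case False
      with Suc.prems have "c' = m" by simp
      then show ?thesis using bt_diag[of m] by simp
    qed
    have eq: "S (Suc m) (Suc c') = insert [] ((#) False ` S m (min (Suc c') m) \<union> (#) True ` S (Suc m) c')"
      using S_eq[of "Suc c'" m] Suc.prems by simp
    have fin: "finite (S (Suc m) (Suc c'))" using eq IHc IHm by simp
    have "card (S (Suc m) (Suc c')) = Suc (card ((#) False ` S m (min (Suc c') m) \<union> (#) True ` S (Suc m) c'))"
      unfolding eq using IHc IHm by (subst card_insert_disjoint) auto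
    also have "\<dots> = Suc (card ((#) False ` S m (min (Suc c') m)) + card ((#) True ` S (Suc m) c'))"
      using IHc IHm by (subst card_Un_disjoint) auto
    also have "\<dots> = Suc (card (S m (min (Suc c') m)) + card (S (Suc m) c'))"
      by (simp add: card_image inj_on_def)
    finally have "int (card (S (Suc m) (Suc c'))) + 1 = bt (Suc m) (Suc c')"
      using IHc IHm bteq bt_pascal[of m c'] by simp
    with fin show ?case by simp
  qed
qed


lemma cat_eq: "int (catalan (k+1)) = bt k k"
proof -
  define X where "X = (2*k+2 choose (k+1))"
  define Y where "Y = (2*k+2 choose k)"
  have r: "Suc k * X = Suc (Suc k) * Y"
    using Suc_times_binomial_add[of k "k+1"] unfolding X_def Y_def
    by (simp add: numeral_2_eq_2 add_ac)
  then have "Y \<le> X" by (metis le_add2 mult_Suc mult_le_cancel1 not_less_eq_eq mult.commute le_add1 nat_mult_le_cancel_disj) 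
  have c: "catalan (k+1) = X div (k+2)"
    unfolding catalan_def X_def by (simp add: algebra_simps)
  have "X = (k+2) * (X - Y)" using r \<open>Y \<le> X\<close> by (simp add: algebra_simps diff_mult_distrib2)
  then have "X div (k+2) = X - Y" by (metis add_2_eq_Suc' nonzero_mult_div_cancel_left zero_neq_numeral add_is_0)
  moreover have e: "k + 1 + Suc k = 2*k+2" by simp
  have "bt k (Suc k) = int X - int Y"
    unfolding bt_def X_def Y_def e by simp
  ultimately show ?thesis using c bt_diag[of k] \<open>Y \<le> X\<close> by simp
qed

theorem corollary3p7:
  fixes k :: nat
  assumes "k \<ge> 1"
  shows "finite {w :: bool list. avoid_all k w}
         \<and> card {w :: bool list. avoid_all k w} = catalan (k + 1) - 1
         \<and> (\<Sum>m = 0..2 * k - 2. B k m) = catalan (k + 1) - 1"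
proof -
  let ?A = "{w :: bool list. avoid_all k w}"
  have A: "?A = S k k" using counts by (auto simp: S_def)
  have m: "finite ?A \<and> int (card ?A) + 1 = bt k k" using main[of k k] A by simp
  then have cA: "card ?A = catalan (k + 1) - 1" using cat_eq[of k] by linarith
  have U: "?A = (\<Union>m\<in>{0..2*k-2}. {w. length w = m \<and> avoid_all k w})"
  proof (rule set_eqI)
    fix w show "w \<in> ?A \<longleftrightarrow> w \<in> (\<Union>m\<in>{0..2*k-2}. {w. length w = m \<and> avoid_all k w})"
      using counts[of k w] by auto
  qed
  have "(\<Sum>m = 0..2 * k - 2. B k m) = card (\<Union>m\<in>{0..2*k-2}. {w. length w = m \<and> avoid_all k w})"
    unfolding B_def
  proof (rule card_UN_disjoint[symmetric])
    show "finite {0..2 * k - 2}" by simp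
    show "\<forall>i\<in>{0..2 * k - 2}. finite {w. length w = i \<and> avoid_all k w}"
    proof
      fix i show "finite {w. length w = i \<and> avoid_all k w}"
        by (rule finite_subset[of _ ?A]) (use m in auto)
    qed
    show "\<forall>i\<in>{0..2 * k - 2}. \<forall>j\<in>{0..2 * k - 2}. i \<noteq> j \<longrightarrow>
        {w. length w = i \<and> avoid_all k w} \<inter> {w. length w = j \<and> avoid_all k w} = {}" by auto
  qed
  then have "(\<Sum>m = 0..2 * k - 2. B k m) = card ?A" by (simp only: U)
  with m cA show ?thesis by simp
qed

end
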